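(* Let $X,Y$ be real Banach spaces with a bilinear map $\langle\cdot,\cdot\rangle\colon X\times Y\to\mathbb{R}$ and normalized sequences $(e_j)\subset X$, $(f_j)\subset Y$ satisfying (B1)–(B5) below, and assume $(e_j)$ is $(C_u,C_s)$-subsymmetric. Let $L\in\mathbb{N}$, let $(\mathcal{B}_j)$ be a sequence of sets $\mathcal{B}_j\subset\mathbb{N}$ with $|\mathcal{B}_j|=L$ and $\max\mathcal{B}_j<\min\mathcal{B}_{j+1}$ for all $j$, and let $(\varepsilon_k)\in\{\pm1\}^{\mathbb{N}}$. Put $b_j=\sum_{k\in\mathcal{B}_j}\varepsilon_ke_k$, $d_j=\sum_{k\in\mathcal{B}_j}\varepsilon_kf_k$, and define $B,Q\colon X\to X$ by $$Bx=\sum_{j=1}^\infty\langle x,f_j\rangle b_j,\qquad Qx=\sum_{j=1}^\infty\langle x,d_j\rangle e_j,\qquad x\in X.$$ Then $B$ and $Q$ are well defined bounded operators (the series converging in $\sigma(X,Y)$), $QB=L\cdot I_X$, and $\|B\|,\|Q\|\le C_uC_s\cdot L$.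
   Context: Standing assumptions: (B1) if $\langle x,y\rangle=0$ for all $y\in Y$ then $x=0$; (B2) if $\langle x,y\rangle=0$ for all $x\in X$ then $y=0$; (B3) there is $C_d>0$ with $|\langle x,y\rangle|\le C_d\|x\|\|y\|$; (B4) $\langle e_j,f_k\rangle=1$ if $j=k$ and $0$ otherwise; (B5) every $x\in X$ has the unique representation $x=\sum_j\langle x,f_j\rangle e_j$ converging in $\sigma(X,Y)$, the topology generated by the seminorms $x\mapsto|\langle x,y\rangle|$, $y\in Y$. Series $\sum a_je_j$ are required to converge in $\sigma(X,Y)$. $(e_j)$ is $C_u$-unconditional if $\|\sum\gamma_ja_je_j\|\le C_u\sup_k|\gamma_k|\|\sum a_je_j\|$; $C_s$-spreading if for every increasing $(n_j)$, $C_s^{-1}\|\sum a_je_{n_j}\|\le\|\sum a_je_j\|\le C_s\|\sum a_je_{n_j}\|$; $(C_u,C_s)$-subsymmetric if both. *)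

theory Defs
  imports "HOL-Analysis.Analysis"
begin

text \<open>Convergence of the series sum of u j (j = 0,1,2,...) to x in the topology sigma(X,Y)
  generated by the seminorms x |-> |pair x y|, y in Y.\<close>
definition wsums :: "('x::real_vector \<Rightarrow> 'y \<Rightarrow> real) \<Rightarrow> (nat \<Rightarrow> 'x) \<Rightarrow> 'x \<Rightarrow> bool" where
  "wsums pair u x \<longleftrightarrow> (\<forall>y. (\<lambda>n. pair (\<Sum>j<n. u j) y) \<longlonglongrightarrow> pair x y)"

definition dual_pair_basis ::
  "('x::banach \<Rightarrow> 'y::banach \<Rightarrow> real) \<Rightarrow> (nat \<Rightarrow> 'x) \<Rightarrow> (nat \<Rightarrow> 'y) \<Rightarrow> bool" where
  "dual_pair_basis pair e f \<longleftrightarrow>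
     bilinear pair \<and>
     (\<forall>j. norm (e j) = 1) \<and> (\<forall>j. norm (f j) = 1) \<and>
     (\<forall>x. (\<forall>y. pair x y = 0) \<longrightarrow> x = 0) \<and>
     (\<forall>y. (\<forall>x. pair x y = 0) \<longrightarrow> y = 0) \<and>
     (\<exists>Cd>0. \<forall>x y. \<bar>pair x y\<bar> \<le> Cd * norm x * norm y) \<and>
     (\<forall>j k. pair (e j) (f k) = (if j = k then 1 else 0)) \<and>
     (\<forall>x. wsums pair (\<lambda>j. pair x (f j) *\<^sub>R e j) x) \<and>
     (\<forall>x a. wsums pair (\<lambda>j. a j *\<^sub>R e j) x \<longrightarrow> (\<forall>j. a j = pair x (f j)))"

definition unconditional_basis ::
  "('x::real_normed_vector \<Rightarrow> 'y \<Rightarrow> real) \<Rightarrow> (nat \<Rightarrow> 'x) \<Rightarrow> real \<Rightarrow> bool" where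
  "unconditional_basis pair e Cu \<longleftrightarrow>
     (\<forall>a \<gamma> x. bounded (range \<gamma>) \<longrightarrow> wsums pair (\<lambda>j. a j *\<^sub>R e j) x \<longrightarrow>
        (\<exists>z. wsums pair (\<lambda>j. (\<gamma> j * a j) *\<^sub>R e j) z \<and>
             norm z \<le> Cu * (SUP k. \<bar>\<gamma> k\<bar>) * norm x))"

definition spreading_basis ::
  "('x::real_normed_vector \<Rightarrow> 'y \<Rightarrow> real) \<Rightarrow> (nat \<Rightarrow> 'x) \<Rightarrow> real \<Rightarrow> bool" where
  "spreading_basis pair e Cs \<longleftrightarrow> 0 < Cs \<and>
     (\<forall>a n. strict_mono n \<longrightarrow>
        (\<forall>x. wsums pair (\<lambda>j. a j *\<^sub>R e j) x \<longrightarrow>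
           (\<exists>z. wsums pair (\<lambda>j. a j *\<^sub>R e (n j)) z \<and>
                inverse Cs * norm z \<le> norm x \<and> norm x \<le> Cs * norm z)) \<and>
        (\<forall>z. wsums pair (\<lambda>j. a j *\<^sub>R e (n j)) z \<longrightarrow>
           (\<exists>x. wsums pair (\<lambda>j. a j *\<^sub>R e j) x \<and>
                inverse Cs * norm z \<le> norm x \<and> norm x \<le> Cs * norm z)))"

definition subsymmetric_basis ::
  "('x::real_normed_vector \<Rightarrow> 'y \<Rightarrow> real) \<Rightarrow> (nat \<Rightarrow> 'x) \<Rightarrow> real \<Rightarrow> real \<Rightarrow> bool" where
  "subsymmetric_basis pair e Cu Cs \<longleftrightarrow> unconditional_basis pair e Cu \<and> spreading_basis pair e Cs"

end

theory Submission
  imports Defs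
begin

lemma bil_rsum: assumes "bilinear p" shows "p x (\<Sum>k\<in>S. g k) = (\<Sum>k\<in>S. p x (g k))"
proof (cases "finite S")
  case True thus ?thesis by induct (simp_all add: bilinear_radd[OF assms] bilinear_rzero[OF assms])
qed (simp add: bilinear_rzero[OF assms])

lemma bil_lsum: assumes "bilinear p" shows "p (\<Sum>k\<in>S. g k) y = (\<Sum>k\<in>S. p (g k) y)"
proof (cases "finite S")
  case True thus ?thesis by induct (simp_all add: bilinear_ladd[OF assms] bilinear_lzero[OF assms])
qed (simp add: bilinear_lzero[OF assms])

lemma wsums_unique:
  assumes b: "bilinear p" and B1: "\<forall>x. (\<forall>y. p x y = 0) \<longrightarrow> x = 0"
    and "wsums p u x" "wsums p u x'" shows "x = x'"
proof -
  have "p x y = p x' y" for y using assms(3,4) unfolding wsums_def by (meson LIMSEQ_unique)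
  hence "\<forall>y. p (x - x') y = 0" by (simp add: bilinear_lsub[OF b])
  thus ?thesis using B1 by auto
qed

lemma wsums_cong: "wsums p u x \<Longrightarrow> (\<And>j. u j = v j) \<Longrightarrow> wsums p v x"
  by (metis ext)

lemma wsums_add: assumes b: "bilinear p" and "wsums p u x" "wsums p v z"
  shows "wsums p (\<lambda>j. u j + v j) (x + z)"
  using assms(2,3) unfolding wsums_def
  by (simp add: sum.distrib bilinear_ladd[OF b] tendsto_add)

lemma wsums_scale: assumes b: "bilinear p" and "wsums p u x"
  shows "wsums p (\<lambda>j. c *\<^sub>R u j) (c *\<^sub>R x)"
  using assms(2) unfolding wsums_def
  by (simp add: scaleR_sum_right[symmetric] bilinear_lmul[OF b] tendsto_mult_left del: scaleR_sum_right)

lemma wsums_sum: assumes b: "bilinear p" and "\<And>i. i \<in> I \<Longrightarrow> wsums p (u i) (x i)"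
  shows "wsums p (\<lambda>j. \<Sum>i\<in>I. u i j) (\<Sum>i\<in>I. x i)"
  using assms(2) unfolding wsums_def
  by (auto simp: sum.swap[of _ I] bil_lsum[OF b] intro!: tendsto_sum)

lemma wsums_reindex:
  assumes b: "bilinear p" and n: "strict_mono n" and c: "\<And>k. k \<notin> range n \<Longrightarrow> c k = 0"
    and w: "wsums p (\<lambda>k. c k *\<^sub>R e k) u"
  shows "wsums p (\<lambda>j. c (n j) *\<^sub>R e (n j)) u"
  unfolding wsums_def
proof
  fix y
  have eq: "(\<Sum>j<m. c (n j) *\<^sub>R e (n j)) = (\<Sum>k<n m. c k *\<^sub>R e k)" for m
  proof -
    have sub: "n ` {..<m} \<subseteq> {..<n m}" using n by (auto simp: strict_mono_less)
    have "(\<Sum>k<n m. c k *\<^sub>R e k) = (\<Sum>k\<in>n ` {..<m}. c k *\<^sub>R e k)"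
    proof (rule sum.mono_neutral_right)
      show "\<forall>i\<in>{..<n m} - n ` {..<m}. c i *\<^sub>R e i = 0"
      proof
        fix i assume i: "i \<in> {..<n m} - n ` {..<m}"
        show "c i *\<^sub>R e i = 0"
        proof (cases "i \<in> range n")
          case True then obtain j where "i = n j" by auto
          with i n show ?thesis by (auto simp: strict_mono_less)
        qed (simp add: c)
      qed
    qed (use sub in auto)
    also have "\<dots> = (\<Sum>j<m. c (n j) *\<^sub>R e (n j))"
      using strict_mono_imp_inj_on[OF n, of "{..<m}"] by (simp add: sum.reindex)
    finally show ?thesis by simp
  qed
  have "(\<lambda>m. p (\<Sum>k<m. c k *\<^sub>R e k) y) \<longlonglongrightarrow> p u y" using w unfolding wsums_def by blast
  from LIMSEQ_subseq_LIMSEQ[OF this n]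
  show "(\<lambda>m. p (\<Sum>j<m. c (n j) *\<^sub>R e (n j)) y) \<longlonglongrightarrow> p u y" by (simp add: eq comp_def)
qed

lemma op_from_series:
  fixes S :: "'x::banach \<Rightarrow> nat \<Rightarrow> 'x" and p :: "'x \<Rightarrow> 'y::banach \<Rightarrow> real"
  assumes b: "bilinear p" and B1: "\<forall>x. (\<forall>y. p x y = 0) \<longrightarrow> x = 0"
    and add: "\<And>x z j. S (x + z) j = S x j + S z j"
    and sc: "\<And>c x j. S (c *\<^sub>R x) j = c *\<^sub>R S x j"
    and ex: "\<And>x. \<exists>z. wsums p (S x) z \<and> norm z \<le> K * norm x"
    and K: "K \<ge> 0"
  shows "\<exists>T. (\<forall>x. wsums p (S x) (T x)) \<and> bounded_linear T \<and> onorm T \<le> K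
     \<and> (\<forall>x z. wsums p (S x) z \<longrightarrow> T x = z)"
proof -
  define T where "T x = (THE z. wsums p (S x) z)" for x
  have uq: "wsums p (S x) z \<Longrightarrow> T x = z" for x z
    unfolding T_def using wsums_unique[OF b B1] by blast
  have ws: "wsums p (S x) (T x)" for x using ex[of x] uq by metis
  have nb: "norm (T x) \<le> K * norm x" for x using ex[of x] uq by metis
  have "T (x + z) = T x + T z" for x z
    by (rule uq, rule wsums_cong[OF wsums_add[OF b ws ws]]) (simp add: add)
  moreover have "T (c *\<^sub>R x) = c *\<^sub>R T x" for c x
    by (rule uq, rule wsums_cong[OF wsums_scale[OF b ws]]) (simp add: sc)
  ultimately have bl: "bounded_linear T"
    by (intro bounded_linear_intro[where K=K]) (auto simp: nb mult.commute)
  have "onorm T \<le> K" by (rule onorm_bound[OF K]) (simp add: nb)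
  with ws bl uq show ?thesis by blast
qed


lemma block_facts:
  fixes Bl :: "nat \<Rightarrow> nat set" and L :: nat
  assumes L: "L \<ge> 1" and card_Bl: "\<And>j. card (Bl j) = L"
    and Bl_order: "\<And>j. Max (Bl j) < Min (Bl (Suc j))"
  defines "nn \<equiv> \<lambda>i j. sorted_list_of_set (Bl j) ! i"
  shows "\<And>i j. i < L \<Longrightarrow> nn i j \<in> Bl j"
    and "\<And>i. i < L \<Longrightarrow> strict_mono (nn i)"
    and "\<And>j (g :: nat \<Rightarrow> 'a::comm_monoid_add). (\<Sum>k\<in>Bl j. g k) = (\<Sum>i<L. g (nn i j))"
    and "\<And>j j' k. k \<in> Bl j \<Longrightarrow> k \<in> Bl j' \<Longrightarrow> j = j'"
proof -
  have fin: "finite (Bl j)" and ne: "Bl j \<noteq> {}" for j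
    using card_Bl[of j] L by (metis card.infinite not_one_le_zero, metis card.empty not_one_le_zero)
  have len: "length (sorted_list_of_set (Bl j)) = L" for j using card_Bl[of j] by simp
  show mem: "\<And>i j. i < L \<Longrightarrow> nn i j \<in> Bl j"
    unfolding nn_def using len fin by (metis nth_mem set_sorted_list_of_set)
  show "\<And>i. i < L \<Longrightarrow> strict_mono (nn i)"
  proof (rule strict_mono_Suc_iff[THEN iffD2], rule allI)
    fix i j assume i: "i < L"
    have "nn i j \<le> Max (Bl j)" using mem[OF i] fin by simp
    also have "\<dots> < Min (Bl (Suc j))" by (rule Bl_order)
    also have "\<dots> \<le> nn i (Suc j)" using mem[OF i] fin by simp
    finally show "nn i j < nn i (Suc j)" .
  qed
  show "(\<Sum>k\<in>Bl j. g k) = (\<Sum>i<L. g (nn i j))" for j and g :: "nat \<Rightarrow> 'a::comm_monoid_add"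
  proof -
    have "(\<Sum>k\<in>Bl j. g k) = sum_list (map g (sorted_list_of_set (Bl j)))"
      using fin[of j] by (simp add: sum_list_distinct_conv_sum_set)
    also have "\<dots> = (\<Sum>i = 0..<L. g (nn i j))"
      by (simp add: sum_list_sum_nth card_Bl nn_def)
    finally show ?thesis by (simp add: atLeast0LessThan)
  qed
  have mono: "j < j' \<Longrightarrow> Max (Bl j) < Min (Bl j')" for j j'
  proof (induction j')
    case (Suc j')
    show ?case
    proof (cases "j = j'")
      case True thus ?thesis using Bl_order by simp
    next
      case False
      with Suc have "Max (Bl j) < Min (Bl j')" by simp
      also have "Min (Bl j') \<le> Max (Bl j')" using fin ne by simp
      also have "\<dots> < Min (Bl (Suc j'))" by (rule Bl_order)
      finally show ?thesis .
    qed
  qed simp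
  show "k \<in> Bl j \<Longrightarrow> k \<in> Bl j' \<Longrightarrow> j = j'" for j j' k
  proof (rule ccontr)
    assume k: "k \<in> Bl j" "k \<in> Bl j'" and ne': "j \<noteq> j'"
    show False
    proof (cases "j < j'")
      case True
      have "k \<le> Max (Bl j)" using k fin by simp
      also have "\<dots> < Min (Bl j')" using mono True by simp
      also have "\<dots> \<le> k" using k fin by simp
      finally show False by simp
    next
      case False
      hence "j' < j" using ne' by simp
      have "k \<le> Max (Bl j')" using k fin by simp
      also have "\<dots> < Min (Bl j)" using mono \<open>j' < j\<close> by simp
      also have "\<dots> \<le> k" using k fin by simp
      finally show False by simp
    qed
  qed
qed


theorem proposition3p5:
  fixes pair :: "'x::banach \<Rightarrow> 'y::banach \<Rightarrow> real"
    and e :: "nat \<Rightarrow> 'x" and f :: "nat \<Rightarrow> 'y"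
    and Cu Cs :: real and L :: nat
    and Bl :: "nat \<Rightarrow> nat set" and \<epsilon> :: "nat \<Rightarrow> real"
  assumes basis: "dual_pair_basis pair e f"
    and subsym: "subsymmetric_basis pair e Cu Cs"
    and L: "L \<ge> 1"
    and card_Bl: "\<And>j. card (Bl j) = L"
    and Bl_order: "\<And>j. Max (Bl j) < Min (Bl (Suc j))"
    and signs: "\<And>k. \<epsilon> k \<in> {-1, 1}"
  shows "\<exists>B Q :: 'x \<Rightarrow> 'x.
           (\<forall>x. wsums pair (\<lambda>j. pair x (f j) *\<^sub>R (\<Sum>k\<in>Bl j. \<epsilon> k *\<^sub>R e k)) (B x)) \<and>
           (\<forall>x. wsums pair (\<lambda>j. pair x (\<Sum>k\<in>Bl j. \<epsilon> k *\<^sub>R f k) *\<^sub>R e j) (Q x)) \<and>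
           bounded_linear B \<and> bounded_linear Q \<and>
           (\<forall>x. Q (B x) = real L *\<^sub>R x) \<and>
           onorm B \<le> Cu * Cs * real L \<and> onorm Q \<le> Cu * Cs * real L"
proof -
  note bf = block_facts[where Bl=Bl and L=L, OF L card_Bl Bl_order]
  define nn where "nn \<equiv> \<lambda>i j. sorted_list_of_set (Bl j) ! i"
  have nn_mem: "\<And>i j. i < L \<Longrightarrow> nn i j \<in> Bl j" using bf(1) unfolding nn_def .
  have nn_mono: "\<And>i. i < L \<Longrightarrow> strict_mono (nn i)" using bf(2) unfolding nn_def .
  have bsum: "\<And>j (g :: nat \<Rightarrow> 'a::comm_monoid_add). (\<Sum>k\<in>Bl j. g k) = (\<Sum>i<L. g (nn i j))"
    using bf(3) unfolding nn_def .
  have disj: "\<And>j j' k. k \<in> Bl j \<Longrightarrow> k \<in> Bl j' \<Longrightarrow> j = j'" using bf(4) .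
  have fin: "finite (Bl j)" for j
    using card_Bl[of j] L by (metis card.infinite not_one_le_zero)
  have b: "bilinear pair" and B1: "\<forall>x. (\<forall>y. pair x y = 0) \<longrightarrow> x = 0"
    and delta: "\<And>j k. pair (e j) (f k) = (if j = k then 1 else 0)"
    and expand: "\<And>x. wsums pair (\<lambda>j. pair x (f j) *\<^sub>R e j) x"
    and ne: "\<And>j. norm (e j) = 1"
    using basis unfolding dual_pair_basis_def by simp_all
  have unc0: "unconditional_basis pair e Cu" and sb: "spreading_basis pair e Cs"
    using subsym unfolding subsymmetric_basis_def by (rule conjunct1, rule conjunct2)
  have Cs: "Cs > 0" using sb unfolding spreading_basis_def by (rule conjunct1)
  note spr = conjunct2[OF sb[unfolded spreading_basis_def], THEN spec, THEN spec, THEN mp]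
  have eps1: "\<bar>\<epsilon> k\<bar> = 1" for k using signs[of k] by auto
  have eps2: "\<epsilon> k * \<epsilon> k = 1" for k using signs[of k] by auto
  have uq: "wsums pair u x \<Longrightarrow> wsums pair u x' \<Longrightarrow> x = x'" for u x x'
    using wsums_unique[OF b B1] by blast
  have Cu: "Cu \<ge> 0"
  proof -
    have bd1: "bounded (range (\<lambda>_::nat. 1::real))" by (simp add: image_constant_conv)
    obtain z where z: "wsums pair (\<lambda>j. (1 * pair (e 0) (f j)) *\<^sub>R e j) z"
      and nz: "norm z \<le> Cu * (SUP k::nat. \<bar>1::real\<bar>) * norm (e 0)"
      using unc0[unfolded unconditional_basis_def, rule_format,
          of "\<lambda>_. 1" "\<lambda>j. pair (e 0) (f j)" "e 0", OF bd1 expand] by blast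
    have "z = e 0" using uq[OF _ expand[of "e 0"]] z by simp
    thus ?thesis using nz ne by simp
  qed
  have unc: "\<exists>z. wsums pair (\<lambda>j. (\<gamma> j * a j) *\<^sub>R e j) z \<and> norm z \<le> Cu * norm x"
    if g: "\<And>k. \<bar>\<gamma> k\<bar> \<le> 1" and w: "wsums pair (\<lambda>j. a j *\<^sub>R e j) x" for \<gamma> a x
  proof -
    have "bounded (range \<gamma>)" using g unfolding bounded_iff by auto
    then obtain z where z: "wsums pair (\<lambda>j. (\<gamma> j * a j) *\<^sub>R e j) z"
      and nz: "norm z \<le> Cu * (SUP k. \<bar>\<gamma> k\<bar>) * norm x"
      using unc0[unfolded unconditional_basis_def, rule_format, of \<gamma> a x] w by blast
    have "(SUP k. \<bar>\<gamma> k\<bar>) \<le> 1" using g by (intro cSUP_least) auto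
    hence "Cu * (SUP k. \<bar>\<gamma> k\<bar>) * norm x \<le> Cu * 1 * norm x"
      by (intro mult_right_mono mult_left_mono Cu) auto
    thus ?thesis using z nz by auto
  qed
  have sprf: "\<exists>z. wsums pair (\<lambda>j. a j *\<^sub>R e (n j)) z \<and> norm z \<le> Cs * norm x"
    if n: "strict_mono n" and w: "wsums pair (\<lambda>j. a j *\<^sub>R e j) x" for a n x
  proof -
    obtain z where z: "wsums pair (\<lambda>j. a j *\<^sub>R e (n j)) z" and "inverse Cs * norm z \<le> norm x"
      using spr[OF n, of a] w by blast
    hence "norm z \<le> Cs * norm x" using Cs by (simp add: field_simps)
    thus ?thesis using z by blast
  qed
  have sprb: "\<exists>x. wsums pair (\<lambda>j. a j *\<^sub>R e j) x \<and> norm x \<le> Cs * norm z"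
    if n: "strict_mono n" and w: "wsums pair (\<lambda>j. a j *\<^sub>R e (n j)) z" for a n z
    using spr[OF n, of a] w by blast
  have K: "Cu * Cs * real L \<ge> 0" using Cu Cs by simp
  have exB: "\<exists>z. wsums pair (\<lambda>j. pair x (f j) *\<^sub>R (\<Sum>k\<in>Bl j. \<epsilon> k *\<^sub>R e k)) z
              \<and> norm z \<le> Cu * Cs * real L * norm x" for x
  proof -
    have "\<forall>i\<in>{..<L}. \<exists>w. wsums pair (\<lambda>j. (\<epsilon> (nn i j) * pair x (f j)) *\<^sub>R e (nn i j)) w
            \<and> norm w \<le> Cs * (Cu * norm x)"
    proof
      fix i assume "i \<in> {..<L}"
      hence i: "i < L" by simp
      obtain xi where xi: "wsums pair (\<lambda>j. (\<epsilon> (nn i j) * pair x (f j)) *\<^sub>R e j) xi"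
        and nxi: "norm xi \<le> Cu * norm x"
        using unc[of "\<lambda>j. \<epsilon> (nn i j)", OF _ expand[of x]] eps1 by auto
      obtain w where "wsums pair (\<lambda>j. (\<epsilon> (nn i j) * pair x (f j)) *\<^sub>R e (nn i j)) w"
        and "norm w \<le> Cs * norm xi" using sprf[OF nn_mono[OF i] xi] by blast
      moreover have "Cs * norm xi \<le> Cs * (Cu * norm x)" using nxi Cs by simp
      ultimately show "\<exists>w. wsums pair (\<lambda>j. (\<epsilon> (nn i j) * pair x (f j)) *\<^sub>R e (nn i j)) w
            \<and> norm w \<le> Cs * (Cu * norm x)" by auto
    qed
    then obtain W where W: "\<And>i. i \<in> {..<L} \<Longrightarrow>
        wsums pair (\<lambda>j. (\<epsilon> (nn i j) * pair x (f j)) *\<^sub>R e (nn i j)) (W i)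
            \<and> norm (W i) \<le> Cs * (Cu * norm x)" by metis
    have ws: "wsums pair (\<lambda>j. \<Sum>i<L. (\<epsilon> (nn i j) * pair x (f j)) *\<^sub>R e (nn i j)) (\<Sum>i<L. W i)"
      using W by (intro wsums_sum[OF b]) auto
    have eq: "(\<Sum>i<L. (\<epsilon> (nn i j) * pair x (f j)) *\<^sub>R e (nn i j))
        = pair x (f j) *\<^sub>R (\<Sum>k\<in>Bl j. \<epsilon> k *\<^sub>R e k)" for j
      by (simp add: bsum scaleR_sum_right mult.commute)
    have "norm (\<Sum>i<L. W i) \<le> (\<Sum>i<L. norm (W i))" by (rule norm_sum)
    also have "\<dots> \<le> (\<Sum>i<L. Cs * (Cu * norm x))" using W by (intro sum_mono) auto
    also have "\<dots> = Cu * Cs * real L * norm x" by simp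
    finally show ?thesis using wsums_cong[OF ws eq] by blast
  qed
  obtain TB where TBws: "\<forall>x. wsums pair (\<lambda>j. pair x (f j) *\<^sub>R (\<Sum>k\<in>Bl j. \<epsilon> k *\<^sub>R e k)) (TB x)"
    and TBbl: "bounded_linear TB" and TBon: "onorm TB \<le> Cu * Cs * real L"
  proof -
    have a1: "\<And>x z j. pair (x + z) (f j) *\<^sub>R (\<Sum>k\<in>Bl j. \<epsilon> k *\<^sub>R e k)
       = pair x (f j) *\<^sub>R (\<Sum>k\<in>Bl j. \<epsilon> k *\<^sub>R e k) + pair z (f j) *\<^sub>R (\<Sum>k\<in>Bl j. \<epsilon> k *\<^sub>R e k)"
      by (simp add: bilinear_ladd[OF b] scaleR_add_left)
    have a2: "\<And>c x j. pair (c *\<^sub>R x) (f j) *\<^sub>R (\<Sum>k\<in>Bl j. \<epsilon> k *\<^sub>R e k)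
       = c *\<^sub>R (pair x (f j) *\<^sub>R (\<Sum>k\<in>Bl j. \<epsilon> k *\<^sub>R e k))"
      by (simp add: bilinear_lmul[OF b])
    show ?thesis
      using op_from_series[OF b B1, where S="\<lambda>x j. pair x (f j) *\<^sub>R (\<Sum>k\<in>Bl j. \<epsilon> k *\<^sub>R e k)",
        OF a1 a2 exB K] that by blast
  qed
  have exQ: "\<exists>z. wsums pair (\<lambda>j. pair x (\<Sum>k\<in>Bl j. \<epsilon> k *\<^sub>R f k) *\<^sub>R e j) z
              \<and> norm z \<le> Cu * Cs * real L * norm x" for x
  proof -
    have "\<forall>i\<in>{..<L}. \<exists>w. wsums pair (\<lambda>j. (\<epsilon> (nn i j) * pair x (f (nn i j))) *\<^sub>R e j) w
            \<and> norm w \<le> Cs * (Cu * norm x)"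
    proof
      fix i assume "i \<in> {..<L}"
      hence i: "i < L" by simp
      define \<gamma> where "\<gamma> k = (if k \<in> range (nn i) then \<epsilon> k else 0)" for k
      have gb: "\<bar>\<gamma> k\<bar> \<le> 1" for k unfolding \<gamma>_def using eps1[of k] by simp
      obtain u where u: "wsums pair (\<lambda>k. (\<gamma> k * pair x (f k)) *\<^sub>R e k) u"
        and nu: "norm u \<le> Cu * norm x"
        using unc[of \<gamma>, OF gb expand[of x]] by blast
      have u2: "wsums pair (\<lambda>j. (\<gamma> (nn i j) * pair x (f (nn i j))) *\<^sub>R e (nn i j)) u"
        by (rule wsums_reindex[OF b nn_mono[OF i], where c = "\<lambda>k. \<gamma> k * pair x (f k)", OF _ u])
          (simp add: \<gamma>_def)
      have "\<gamma> (nn i j) = \<epsilon> (nn i j)" for j unfolding \<gamma>_def by auto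
      hence u3: "wsums pair (\<lambda>j. (\<epsilon> (nn i j) * pair x (f (nn i j))) *\<^sub>R e (nn i j)) u"
        using u2 by simp
      obtain w where "wsums pair (\<lambda>j. (\<epsilon> (nn i j) * pair x (f (nn i j))) *\<^sub>R e j) w"
        and "norm w \<le> Cs * norm u" using sprb[OF nn_mono[OF i] u3] by blast
      moreover have "Cs * norm u \<le> Cs * (Cu * norm x)" using nu Cs by simp
      ultimately show "\<exists>w. wsums pair (\<lambda>j. (\<epsilon> (nn i j) * pair x (f (nn i j))) *\<^sub>R e j) w
            \<and> norm w \<le> Cs * (Cu * norm x)" by auto
    qed
    then obtain W where W: "\<And>i. i \<in> {..<L} \<Longrightarrow>
        wsums pair (\<lambda>j. (\<epsilon> (nn i j) * pair x (f (nn i j))) *\<^sub>R e j) (W i)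
            \<and> norm (W i) \<le> Cs * (Cu * norm x)" by metis
    have ws: "wsums pair (\<lambda>j. \<Sum>i<L. (\<epsilon> (nn i j) * pair x (f (nn i j))) *\<^sub>R e j) (\<Sum>i<L. W i)"
      using W by (intro wsums_sum[OF b]) auto
    have eq: "(\<Sum>i<L. (\<epsilon> (nn i j) * pair x (f (nn i j))) *\<^sub>R e j)
        = pair x (\<Sum>k\<in>Bl j. \<epsilon> k *\<^sub>R f k) *\<^sub>R e j" for j
      by (simp add: bil_rsum[OF b] bilinear_rmul[OF b] bsum scaleR_sum_left)
    have "norm (\<Sum>i<L. W i) \<le> (\<Sum>i<L. norm (W i))" by (rule norm_sum)
    also have "\<dots> \<le> (\<Sum>i<L. Cs * (Cu * norm x))" using W by (intro sum_mono) auto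
    also have "\<dots> = Cu * Cs * real L * norm x" by simp
    finally show ?thesis using wsums_cong[OF ws eq] by blast
  qed
  obtain TQ where TQws: "\<forall>x. wsums pair (\<lambda>j. pair x (\<Sum>k\<in>Bl j. \<epsilon> k *\<^sub>R f k) *\<^sub>R e j) (TQ x)"
    and TQbl: "bounded_linear TQ" and TQon: "onorm TQ \<le> Cu * Cs * real L"
    and TQuq: "\<forall>x z. wsums pair (\<lambda>j. pair x (\<Sum>k\<in>Bl j. \<epsilon> k *\<^sub>R f k) *\<^sub>R e j) z \<longrightarrow> TQ x = z"
  proof -
    have a1: "\<And>x z j. pair (x + z) (\<Sum>k\<in>Bl j. \<epsilon> k *\<^sub>R f k) *\<^sub>R e j
       = pair x (\<Sum>k\<in>Bl j. \<epsilon> k *\<^sub>R f k) *\<^sub>R e j + pair z (\<Sum>k\<in>Bl j. \<epsilon> k *\<^sub>R f k) *\<^sub>R e j"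
      by (simp add: bilinear_ladd[OF b] scaleR_add_left)
    have a2: "\<And>c x j. pair (c *\<^sub>R x) (\<Sum>k\<in>Bl j. \<epsilon> k *\<^sub>R f k) *\<^sub>R e j
       = c *\<^sub>R (pair x (\<Sum>k\<in>Bl j. \<epsilon> k *\<^sub>R f k) *\<^sub>R e j)"
      by (simp add: bilinear_lmul[OF b])
    show ?thesis
      using op_from_series[OF b B1, where S="\<lambda>x j. pair x (\<Sum>k\<in>Bl j. \<epsilon> k *\<^sub>R f k) *\<^sub>R e j",
        OF a1 a2 exQ K] that by blast
  qed
  have QB: "TQ (TB x) = real L *\<^sub>R x" for x
  proof -
    have coef: "pair (TB x) (f k) = pair x (f j0) * \<epsilon> k" if k: "k \<in> Bl j0" for k j0
    proof -
      have lim: "(\<lambda>n. pair (\<Sum>j<n. pair x (f j) *\<^sub>R (\<Sum>k\<in>Bl j. \<epsilon> k *\<^sub>R e k)) (f k))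
                  \<longlonglongrightarrow> pair (TB x) (f k)" using TBws unfolding wsums_def by blast
      have iff: "(k \<in> Bl j) = (j = j0)" for j using disj k by blast
      have pb: "pair (\<Sum>k'\<in>Bl j. \<epsilon> k' *\<^sub>R e k') (f k) = (if j = j0 then \<epsilon> k else 0)" for j
      proof -
        have "pair (\<Sum>k'\<in>Bl j. \<epsilon> k' *\<^sub>R e k') (f k) = (\<Sum>k'\<in>Bl j. \<epsilon> k' * (if k' = k then 1 else 0))"
          by (simp add: bil_lsum[OF b] bilinear_lmul[OF b] delta)
        also have "\<dots> = (if k \<in> Bl j then \<epsilon> k else 0)"
          by (simp add: fin if_distrib[of "\<lambda>t. _ * t"] sum.delta' cong: if_cong)
        finally show ?thesis by (simp add: iff)
      qed
      have ev: "eventually (\<lambda>n. pair x (f j0) * \<epsilon> k =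
            pair (\<Sum>j<n. pair x (f j) *\<^sub>R (\<Sum>k\<in>Bl j. \<epsilon> k *\<^sub>R e k)) (f k)) sequentially"
        unfolding eventually_sequentially
      proof (intro exI[of _ "Suc j0"] allI impI)
        fix n assume "Suc j0 \<le> n"
        thus "pair x (f j0) * \<epsilon> k =
            pair (\<Sum>j<n. pair x (f j) *\<^sub>R (\<Sum>k\<in>Bl j. \<epsilon> k *\<^sub>R e k)) (f k)"
        proof -
          define bj where "bj j = (\<Sum>k'\<in>Bl j. \<epsilon> k' *\<^sub>R e k')" for j
          have pb': "pair (bj j) (f k) = (if j = j0 then \<epsilon> k else 0)" for j
            unfolding bj_def by (rule pb)
          have "pair (\<Sum>j<n. pair x (f j) *\<^sub>R bj j) (f k) = (\<Sum>j<n. pair x (f j) * (if j = j0 then \<epsilon> k else 0))"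
            by (simp add: bil_lsum[OF b] bilinear_lmul[OF b] pb')
          also have "\<dots> = pair x (f j0) * \<epsilon> k"
            using \<open>Suc j0 \<le> n\<close> by (simp add: if_distrib[of "\<lambda>t. _ * t"] cong: if_cong)
          finally show ?thesis unfolding bj_def by simp
        qed
      qed
      have "(\<lambda>n. pair (\<Sum>j<n. pair x (f j) *\<^sub>R (\<Sum>k\<in>Bl j. \<epsilon> k *\<^sub>R e k)) (f k))
                  \<longlonglongrightarrow> pair x (f j0) * \<epsilon> k"
        by (rule Lim_transform_eventually[OF tendsto_const ev])
      thus ?thesis using lim LIMSEQ_unique by blast
    qed
    have cd: "pair (TB x) (\<Sum>k\<in>Bl j. \<epsilon> k *\<^sub>R f k) = real L * pair x (f j)" for j
    proof -
      have "pair (TB x) (\<Sum>k\<in>Bl j. \<epsilon> k *\<^sub>R f k) = (\<Sum>k\<in>Bl j. \<epsilon> k * pair (TB x) (f k))"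
        by (simp add: bil_rsum[OF b] bilinear_rmul[OF b])
      also have "\<dots> = (\<Sum>k\<in>Bl j. pair x (f j))"
        by (rule sum.cong) (simp_all add: coef, metis eps2 mult.left_commute mult.right_neutral)
      also have "\<dots> = real L * pair x (f j)" by (simp add: card_Bl)
      finally show ?thesis .
    qed
    have "wsums pair (\<lambda>j. real L *\<^sub>R (pair x (f j) *\<^sub>R e j)) (real L *\<^sub>R x)"
      by (rule wsums_scale[OF b expand])
    hence "wsums pair (\<lambda>j. pair (TB x) (\<Sum>k\<in>Bl j. \<epsilon> k *\<^sub>R f k) *\<^sub>R e j) (real L *\<^sub>R x)"
      by (simp add: cd)
    thus ?thesis using TQuq by blast
  qed
  show ?thesis using TBws TQws TBbl TQbl QB TBon TQon by blast
qed

end
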